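(* Let $R$ be a commutative ring with unity in which every zero divisor is harmless. Then every B-irreducible element of $R$ is irreducible.
   Context: A zero divisor $r$ of $R$ is called harmless if there exists a unit $u\in R$ with $r=1-u$. An element $r\in R$ is called irreducible if whenever $r=ab$ with $a,b\in R$, then $a$ is a unit or $b$ is a unit. A non-zero, non-unit element $r\in R$ is called B-irreducible if the principal ideal $(r)$ is a maximal element, with respect to inclusion, of the set of all proper principal ideals of $R$. *)

theory Defs
  imports Main
begin

definition zero_divisor :: "'a::comm_ring_1 \<Rightarrow> bool" where
  "zero_divisor r \<longleftrightarrow> (\<exists>s. s \<noteq> 0 \<and> r * s = 0)"

definition harmless :: "'a::comm_ring_1 \<Rightarrow> bool" where
  "harmless r \<longleftrightarrow> zero_divisor r \<and> (\<exists>u. u dvd 1 \<and> r = 1 - u)"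

text \<open>Irreducible in the sense of the paper (no nonzero/nonunit requirement).\<close>
definition irred :: "'a::comm_ring_1 \<Rightarrow> bool" where
  "irred r \<longleftrightarrow> (\<forall>a b. r = a * b \<longrightarrow> a dvd 1 \<or> b dvd 1)"

definition principal_ideal :: "'a::comm_ring_1 \<Rightarrow> 'a set" where
  "principal_ideal r = {r * x | x. True}"

definition B_irreducible :: "'a::comm_ring_1 \<Rightarrow> bool" where
  "B_irreducible r \<longleftrightarrow> r \<noteq> 0 \<and> \<not> r dvd 1 \<and>
     (\<forall>s. principal_ideal s \<noteq> UNIV \<longrightarrow> principal_ideal r \<subseteq> principal_ideal s
          \<longrightarrow> principal_ideal s = principal_ideal r)"

end

theory Submission
  imports Defs
begin

theorem mainTheorem2:
  fixes r :: "'a::comm_ring_1"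
  assumes "\<forall>z::'a. zero_divisor z \<longrightarrow> harmless z"
    and "B_irreducible r"
  shows "irred r"
  unfolding irred_def
proof (intro allI impI)
  fix a b assume rab: "r = a * b"
  show "a dvd 1 \<or> b dvd 1"
  proof (rule ccontr)
    assume n: "\<not> (a dvd 1 \<or> b dvd 1)"
    have r0: "r \<noteq> 0" using assms(2) by (simp add: B_irreducible_def)
    have "principal_ideal a \<noteq> UNIV"
    proof
      assume "principal_ideal a = UNIV"
      then have "1 \<in> principal_ideal a" by simp
      then obtain x where "1 = a * x" by (auto simp: principal_ideal_def)
      then have "a dvd 1" by (metis dvdI)
      with n show False by simp
    qed
    moreover have "principal_ideal r \<subseteq> principal_ideal a"
      using rab by (auto simp: principal_ideal_def mult.assoc)
    ultimately have eq: "principal_ideal a = principal_ideal r"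
      using assms(2) by (simp add: B_irreducible_def)
    have "a \<in> principal_ideal a" unfolding principal_ideal_def by (metis (mono_tags, lifting) mem_Collect_eq mult_1_right)
    then obtain c where ac: "a = r * c" using eq by (auto simp: principal_ideal_def)
    have "(1 - c * b) * r = 0" using rab ac by (simp add: algebra_simps)
    then have "zero_divisor (1 - c * b)" using r0 unfolding zero_divisor_def by blast
    then have "harmless (1 - c * b)" using assms(1) by blast
    then obtain u where "u dvd 1" "1 - c * b = 1 - u" unfolding harmless_def by blast
    then have "c * b dvd 1" by simp
    then have "b dvd 1" by (metis dvd_mult_right)
    with n show False by simp
  qed
qed

end
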